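(* Let $f$ be an $n$-variable Boolean function. Then ${LDA}(f)=\min_{1\le k\le n}\mu_k(f+1)$. Furthermore, if $k\ge{LDA}(f)$, then $\mu_k(f+1)={LDA}(f)$.
   Context: An $n$-variable Boolean function is a map $\mathbb{F}_2^n\to\mathbb{F}_2$, with algebraic degree $\deg$ the degree of its algebraic normal form. ${LDA}(h)$ is the minimum algebraic degree of a nonzero $g$ with $h\cdot g=0$. For $1\le k\le n$, ${MUL}_k(h)=\{h\cdot g: g \text{ an } n\text{-variable Boolean function with } \deg(g)\le k\}$ and $\mu_k(h)$ is the minimum algebraic degree of the nonzero elements of ${MUL}_k(h)$. *)

theory Defs
  imports Main "HOL-Library.Extended_Nat"
begin

text \<open>A point x of F_2^n is identified
with its support {i < n. x_i = 1}, a subset of {0..<n}; the value 1 of F_2 is True.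
Functions are required to be False outside the points of F_2^n (extensionality), so
that n-variable Boolean functions correspond bijectively to elements of bfun n.\<close>

definition bfun :: "nat \<Rightarrow> (nat set \<Rightarrow> bool) set" where
  "bfun n = {f. \<forall>S. \<not> S \<subseteq> {0..<n} \<longrightarrow> \<not> f S}"

definition bzero :: "nat set \<Rightarrow> bool" where
  "bzero = (\<lambda>_. False)"

definition bmult :: "(nat set \<Rightarrow> bool) \<Rightarrow> (nat set \<Rightarrow> bool) \<Rightarrow> nat set \<Rightarrow> bool" where
  "bmult h g = (\<lambda>x. h x \<and> g x)"

text \<open>f + 1 (addition of the constant 1 in F_2), as n-variable function.\<close>
definition bplus1 :: "nat \<Rightarrow> (nat set \<Rightarrow> bool) \<Rightarrow> nat set \<Rightarrow> bool" where
  "bplus1 n f = (\<lambda>x. x \<subseteq> {0..<n} \<and> \<not> f x)"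

text \<open>Coefficient of the monomial prod_{i in S} x_i in the algebraic normal form
(Moebius transform): a_S = sum_{T subseteq S} f(T) mod 2.\<close>
definition anf_coeff :: "(nat set \<Rightarrow> bool) \<Rightarrow> nat set \<Rightarrow> bool" where
  "anf_coeff f S = odd (card {T. T \<subseteq> S \<and> f T})"

definition alg_deg :: "nat \<Rightarrow> (nat set \<Rightarrow> bool) \<Rightarrow> nat" where
  "alg_deg n f = Max ({card S | S. S \<subseteq> {0..<n} \<and> anf_coeff f S} \<union> {0})"

definition LDA :: "nat \<Rightarrow> (nat set \<Rightarrow> bool) \<Rightarrow> enat" where
  "LDA n h = (INF g \<in> {g \<in> bfun n. g \<noteq> bzero \<and> bmult h g = bzero}. enat (alg_deg n g))"

definition MUL :: "nat \<Rightarrow> nat \<Rightarrow> (nat set \<Rightarrow> bool) \<Rightarrow> (nat set \<Rightarrow> bool) set" where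
  "MUL n k h = {bmult h g | g. g \<in> bfun n \<and> alg_deg n g \<le> k}"

definition mu :: "nat \<Rightarrow> nat \<Rightarrow> (nat set \<Rightarrow> bool) \<Rightarrow> enat" where
  "mu n k h = (INF p \<in> MUL n k h - {bzero}. enat (alg_deg n p))"

end

theory Submission
  imports Defs
begin

lemma alg_deg_le: "alg_deg n g \<le> n"
proof -
  have fin: "finite ({card S | S. S \<subseteq> {0..<n} \<and> anf_coeff g S} \<union> {0})"
    by (rule finite_subset[of _ "{0..n}"]) (auto dest: card_mono[of "{0..<n}", simplified])
  show ?thesis unfolding alg_deg_def
    using fin by (subst Max_le_iff) (auto dest: card_mono[of "{0..<n}", simplified])
qed

lemma mu_ge:
  assumes "f \<in> bfun n"
  shows "LDA n f \<le> mu n k (bplus1 n f)"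
  unfolding mu_def
proof (rule INF_greatest)
  fix p assume "p \<in> MUL n k (bplus1 n f) - {bzero}"
  then obtain g where p: "p = bmult (bplus1 n f) g" "g \<in> bfun n" "p \<noteq> bzero"
    unfolding MUL_def by auto
  have "p \<in> {g \<in> bfun n. g \<noteq> bzero \<and> bmult f g = bzero}"
    using p by (auto simp: bfun_def bmult_def bplus1_def bzero_def)
  then show "LDA n f \<le> enat (alg_deg n p)" unfolding LDA_def by (rule INF_lower)
qed

lemma LDA_attained:
  assumes "LDA n f \<noteq> \<infinity>"
  shows "\<exists>p. p \<in> bfun n \<and> p \<noteq> bzero \<and> bmult f p = bzero \<and> LDA n f = enat (alg_deg n p)"
proof -
  let ?A = "{g \<in> bfun n. g \<noteq> bzero \<and> bmult f g = bzero}"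
  have ne: "?A \<noteq> {}"
  proof
    assume "?A = {}"
    then have "LDA n f = \<infinity>" unfolding LDA_def by (simp only: image_empty Inf_empty top_enat_def)
    then show False using assms by simp
  qed
  then obtain g0 where "g0 \<in> ?A" by blast
  then obtain p where p: "p \<in> ?A" and pm: "\<And>y. y \<in> ?A \<Longrightarrow> alg_deg n p \<le> alg_deg n y"
    using ex_has_least_nat[of "\<lambda>g. g \<in> ?A" g0 "alg_deg n"] by blast
  have "LDA n f = enat (alg_deg n p)"
  proof (rule antisym)
    show "LDA n f \<le> enat (alg_deg n p)" unfolding LDA_def using p by (rule INF_lower)
    show "enat (alg_deg n p) \<le> LDA n f" unfolding LDA_def
      by (rule INF_greatest) (use pm in auto)
  qed
  then show ?thesis using p by blast
qed

lemma mu_le: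
  assumes "f \<in> bfun n" "LDA n f \<le> enat k"
  shows "mu n k (bplus1 n f) \<le> LDA n f"
proof -
  have "LDA n f \<noteq> \<infinity>" using assms(2) by (cases "LDA n f") auto
  then obtain p where p: "p \<in> bfun n" "p \<noteq> bzero" "bmult f p = bzero"
    and eq: "LDA n f = enat (alg_deg n p)" using LDA_attained by blast
  have pp: "bmult (bplus1 n f) p = p"
  proof
    fix x
    have "\<not> (f x \<and> p x)" using fun_cong[OF p(3), of x] by (simp add: bmult_def bzero_def)
    then show "bmult (bplus1 n f) p x = p x"
      using p(1) by (auto simp: bfun_def bmult_def bplus1_def)
  qed
  have "alg_deg n p \<le> k" using assms(2) eq by simp
  then have "p \<in> MUL n k (bplus1 n f) - {bzero}"
    unfolding MUL_def using p pp by (auto intro!: exI[of _ p])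
  then have "mu n k (bplus1 n f) \<le> enat (alg_deg n p)" unfolding mu_def by (rule INF_lower)
  then show ?thesis using eq by simp
qed

theorem proposition9:
  fixes n :: nat and f :: "nat set \<Rightarrow> bool"
  assumes "1 \<le> n" and "f \<in> bfun n"
  shows "LDA n f = (INF k \<in> {1..n}. mu n k (bplus1 n f))
     \<and> (\<forall>k. 1 \<le> k \<and> k \<le> n \<and> LDA n f \<le> enat k \<longrightarrow> mu n k (bplus1 n f) = LDA n f)"
proof
  show "LDA n f = (INF k \<in> {1..n}. mu n k (bplus1 n f))"
  proof (rule antisym)
    show "LDA n f \<le> (INF k \<in> {1..n}. mu n k (bplus1 n f))"
      by (rule INF_greatest) (rule mu_ge[OF assms(2)])
    show "(INF k \<in> {1..n}. mu n k (bplus1 n f)) \<le> LDA n f"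
    proof (cases "LDA n f = \<infinity>")
      case True then show ?thesis by simp
    next
      case False
      then obtain p where "LDA n f = enat (alg_deg n p)" using LDA_attained by blast
      then have "LDA n f \<le> enat n" using alg_deg_le[of n p] by simp
      then have "mu n n (bplus1 n f) \<le> LDA n f" by (rule mu_le[OF assms(2)])
      moreover have "(INF k \<in> {1..n}. mu n k (bplus1 n f)) \<le> mu n n (bplus1 n f)"
        using assms(1) by (intro INF_lower) auto
      ultimately show ?thesis by simp
    qed
  qed
  show "\<forall>k. 1 \<le> k \<and> k \<le> n \<and> LDA n f \<le> enat k \<longrightarrow> mu n k (bplus1 n f) = LDA n f"
    using mu_le[OF assms(2)] mu_ge[OF assms(2)] by (auto intro: antisym)
qed

end
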